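(* Let $N\ge 2$ and $m$ be integers and let $v$ be a nonzero complex number with $v^N=-1$. For integers $n$ put $\{n\}=v^n-v^{-n}$, $A(j,k)=\{j-k\}\{j+k\}$, $S(k,l)=\prod_{k\le n\le l}\{n\}$, and for a finite family ${\prod'_{i\in I}}a_i=\sum_{i\in I}\prod_{r\in I\setminus\{i\}}a_r$. Define $$D(j,l)=(v^j+v^{-j})\Big(\prod_{k=1}^lA(j,k)+2\{j\}^2{\prod_{1\le k\le l}}'A(j,k)\Big)+\frac{mj}{2}\{j\}\prod_{k=1}^lA(j,k).$$ Then for $1\le j\le N-1$ and $0\le l\le N-1$, $$D(N-j,l)+D(j,l)=\frac{mN}{2}S(j-l,j+l).$$ *)

theory Defs
  imports Complex_Main
begin

definition qbr :: "complex \<Rightarrow> int \<Rightarrow> complex" where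
  "qbr v n = v powi n - v powi (-n)"

definition qA :: "complex \<Rightarrow> int \<Rightarrow> int \<Rightarrow> complex" where
  "qA v j k = qbr v (j - k) * qbr v (j + k)"

definition qS :: "complex \<Rightarrow> int \<Rightarrow> int \<Rightarrow> complex" where
  "qS v k l = (\<Prod>n\<in>{k..l}. qbr v n)"

definition prodp :: "'a set \<Rightarrow> ('a \<Rightarrow> complex) \<Rightarrow> complex" where
  "prodp I a = (\<Sum>i\<in>I. \<Prod>r\<in>I - {i}. a r)"

definition qD :: "complex \<Rightarrow> int \<Rightarrow> int \<Rightarrow> int \<Rightarrow> complex" where
  "qD v m j l =
     (v powi j + v powi (-j)) *
       ((\<Prod>k\<in>{1..l}. qA v j k) + 2 * (qbr v j)^2 * prodp {1..l} (qA v j))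
     + of_int m * of_int j / 2 * qbr v j * (\<Prod>k\<in>{1..l}. qA v j k)"

end

theory Submission
  imports Defs
begin

lemma qbr_refl:
  fixes N :: nat and v :: complex
  assumes "v \<noteq> 0" "v ^ N = -1"
  shows "qbr v (int N - n) = qbr v n"
proof -
  have a: "v powi (int N - n) = -(v powi (-n))"
    using assms by (simp add: power_int_diff power_int_minus field_simps)
  have b: "v powi (-(int N - n)) = -(v powi n)"
    using assms by (simp add: power_int_diff power_int_minus field_simps)
  show ?thesis unfolding qbr_def using a b by simp
qed

lemma qS_expand:
  "qS v (j - int n) (j + int n) = qbr v j * (\<Prod>k\<in>{1..int n}. qA v j k)"
proof (induction n)
  case 0
  then show ?case by (simp add: qS_def)
next
  case (Suc n)
  have s1: "{j - int (Suc n)..j + int (Suc n)} = insert (j - int n - 1) (insert (j + int n + 1) {j - int n..j + int n})"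
    by auto
  have s2: "{1..int (Suc n)} = insert (int n + 1) {1..int n}" by auto
  have "qS v (j - int (Suc n)) (j + int (Suc n)) = qbr v (j - int n - 1) * qbr v (j + int n + 1) * qS v (j - int n) (j + int n)"
    unfolding qS_def s1 by simp
  also have "\<dots> = qbr v j * (\<Prod>k\<in>{1..int (Suc n)}. qA v j k)"
    unfolding Suc s2 by (simp add: qA_def algebra_simps)
  finally show ?case .
qed

theorem lemma2p5:
  fixes N :: nat and m j l :: int and v :: complex
  assumes "N \<ge> 2" and "v \<noteq> 0" and "v ^ N = -1"
    and "1 \<le> j" and "j \<le> int N - 1"
    and "0 \<le> l" and "l \<le> int N - 1"
  shows "qD v m (int N - j) l + qD v m j l = of_int m * of_nat N / 2 * qS v (j - l) (j + l)"
proof -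
  have qA_eq: "qA v (int N - j) k = qA v j k" for k
  proof -
    have "qbr v (int N - j - k) = qbr v (j + k)"
      using qbr_refl[OF assms(2,3), of "j + k"] by (simp add: algebra_simps)
    moreover have "qbr v (int N - j + k) = qbr v (j - k)"
      using qbr_refl[OF assms(2,3), of "j - k"] by (simp add: algebra_simps)
    ultimately show ?thesis by (simp add: qA_def)
  qed
  have fa: "qA v (int N - j) = qA v j" using qA_eq by auto
  have qj: "qbr v (int N - j) = qbr v j" using qbr_refl[OF assms(2,3)] .
  have pw: "v powi (int N - j) + v powi (-(int N - j)) = -(v powi j + v powi (-j))"
    using assms(2,3) by (simp add: power_int_diff power_int_minus field_simps)
  obtain n where n: "l = int n" using assms(6) by (metis nonneg_eq_int)
  have S: "qS v (j - l) (j + l) = qbr v j * (\<Prod>k\<in>{1..l}. qA v j k)"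
    using qS_expand n by simp
  show ?thesis
    unfolding qD_def fa qj pw S
    by (simp add: algebra_simps add_divide_distrib[symmetric])
qed

end
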